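(* Let $A$ and $B$ be two $m\times m$ coloring matrices. If $A$ and $B$ are tree coloring equivalent, then $A$ and $B$ have the same number of entries equal to $1$. If $A$ and $B$ are strictly tree coloring equivalent, then for every $1\le i\le m$, row $i$ of $A$ and row $i$ of $B$ contain the same number of ones.
   Context: A plane tree is an unlabeled rooted tree in which the children of every vertex are linearly ordered (left to right). A coloring matrix is an $m\times m$ matrix $A=(a_{ij})$ with entries in $\{0,1\}$. Given $A$, an $A$-coloring of a plane tree assigns to each vertex a color in $\{1,\dots,m\}$ such that whenever a vertex of color $j$ is a child of a vertex of color $i$, we have $a_{ij}=1$. Let $t_A(n)$ be the number of pairs (plane tree with $n$ vertices, $A$-coloring of it), and $t_A^{(i)}(n)$ the number of those in which the root has color $i$. Two $m\times m$ coloring matrices $A,B$ are tree coloring equivalent if $t_A(n)=t_B(n)$ for all $n\ge1$, and strictly tree coloring equivalent if $t_A^{(i)}(n)=t_B^{(i)}(n)$ for all $n\ge1$ and all $1\le i\le m$. *)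

theory Defs
  imports Main
begin

text \<open>A vertex-coloured plane tree: a root with a colour and an ordered list of
  subtrees. Forgetting the colours gives the underlying plane tree; such an object is
  exactly a pair (plane tree, colouring of its vertices).\<close>
datatype ctree = CNode nat "ctree list"

fun root_color :: "ctree \<Rightarrow> nat" where
  "root_color (CNode c ts) = c"

fun nverts :: "ctree \<Rightarrow> nat" where
  "nverts (CNode c ts) = Suc (sum_list (map nverts ts))"

definition coloring_matrix :: "nat \<Rightarrow> (nat \<Rightarrow> nat \<Rightarrow> nat) \<Rightarrow> bool" where
  "coloring_matrix m A \<longleftrightarrow> (\<forall>i\<in>{1..m}. \<forall>j\<in>{1..m}. A i j \<in> {0, 1})"

fun valid_col :: "nat \<Rightarrow> (nat \<Rightarrow> nat \<Rightarrow> nat) \<Rightarrow> ctree \<Rightarrow> bool" where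
  "valid_col m A (CNode c ts) \<longleftrightarrow> c \<in> {1..m} \<and>
     (\<forall>t\<in>set ts. A c (root_color t) = 1 \<and> valid_col m A t)"

definition tA :: "nat \<Rightarrow> (nat \<Rightarrow> nat \<Rightarrow> nat) \<Rightarrow> nat \<Rightarrow> nat" where
  "tA m A n = card {t. valid_col m A t \<and> nverts t = n}"

definition tAi :: "nat \<Rightarrow> (nat \<Rightarrow> nat \<Rightarrow> nat) \<Rightarrow> nat \<Rightarrow> nat \<Rightarrow> nat" where
  "tAi m A i n = card {t. valid_col m A t \<and> nverts t = n \<and> root_color t = i}"

definition tree_coloring_equiv :: "nat \<Rightarrow> (nat \<Rightarrow> nat \<Rightarrow> nat) \<Rightarrow> (nat \<Rightarrow> nat \<Rightarrow> nat) \<Rightarrow> bool" where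
  "tree_coloring_equiv m A B \<longleftrightarrow> (\<forall>n\<ge>1. tA m A n = tA m B n)"

definition strict_tree_coloring_equiv :: "nat \<Rightarrow> (nat \<Rightarrow> nat \<Rightarrow> nat) \<Rightarrow> (nat \<Rightarrow> nat \<Rightarrow> nat) \<Rightarrow> bool" where
  "strict_tree_coloring_equiv m A B \<longleftrightarrow>
     (\<forall>n\<ge>1. \<forall>i\<in>{1..m}. tAi m A i n = tAi m B i n)"

definition num_ones :: "nat \<Rightarrow> (nat \<Rightarrow> nat \<Rightarrow> nat) \<Rightarrow> nat" where
  "num_ones m A = card {(i, j). i \<in> {1..m} \<and> j \<in> {1..m} \<and> A i j = 1}"

definition row_ones :: "nat \<Rightarrow> (nat \<Rightarrow> nat \<Rightarrow> nat) \<Rightarrow> nat \<Rightarrow> nat" where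
  "row_ones m A i = card {j. j \<in> {1..m} \<and> A i j = 1}"

end

theory Submission
  imports Defs
begin

lemma nv_pos: "nverts t \<noteq> 0"
  by (cases t) auto

lemma sum0: "sum_list (map nverts ts) = 0 \<longleftrightarrow> ts = []"
  using nv_pos by (cases ts) auto

lemma nv1: "nverts t = Suc 0 \<longleftrightarrow> (\<exists>c. t = CNode c [])"
proof (cases t)
  case (CNode c ts)
  then show ?thesis using sum0[of ts] by simp
qed

lemma sum1: "sum_list (map nverts ts) = Suc 0 \<longleftrightarrow> (\<exists>d. ts = [CNode d []])"
proof (cases ts)
  case Nil then show ?thesis by simp
next
  case (Cons a r)
  have "nverts a + sum_list (map nverts r) = Suc 0 \<longleftrightarrow> nverts a = Suc 0 \<and> r = []"
    using nv_pos[of a] sum0[of r] by (cases "nverts a") auto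
  then show ?thesis using Cons nv1[of a] by auto
qed

lemma nv2: "nverts t = 2 \<longleftrightarrow> (\<exists>c d. t = CNode c [CNode d []])"
  by (cases t) (auto simp: sum1 numeral_2_eq_2)

lemma set2: "{t. valid_col m A t \<and> nverts t = 2} =
  (\<lambda>(i,j). CNode i [CNode j []]) ` {(i, j). i \<in> {1..m} \<and> j \<in> {1..m} \<and> A i j = 1}"
proof (rule set_eqI)
  fix t show "t \<in> {t. valid_col m A t \<and> nverts t = 2} \<longleftrightarrow> t \<in> (\<lambda>(i,j). CNode i [CNode j []]) ` {(i, j). i \<in> {1..m} \<and> j \<in> {1..m} \<and> A i j = 1}"
    unfolding mem_Collect_eq nv2 by force
qed

lemma tA2: "tA m A 2 = num_ones m A"
  unfolding tA_def num_ones_def set2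
  by (rule card_image) (auto simp: inj_on_def)

lemma set2i: "{t. valid_col m A t \<and> nverts t = 2 \<and> root_color t = i} =
  (\<lambda>j. CNode i [CNode j []]) ` {j. j \<in> {1..m} \<and> A i j = 1}" if "i \<in> {1..m}"
proof (rule set_eqI)
  fix t show "t \<in> {t. valid_col m A t \<and> nverts t = 2 \<and> root_color t = i} \<longleftrightarrow> t \<in> (\<lambda>j. CNode i [CNode j []]) ` {j. j \<in> {1..m} \<and> A i j = 1}"
    unfolding mem_Collect_eq nv2 using that by force
qed

lemma tAi2: "i \<in> {1..m} \<Longrightarrow> tAi m A i 2 = row_ones m A i"
  unfolding tAi_def row_ones_def
  by (subst set2i) (auto intro!: card_image simp: inj_on_def)

theorem theorem10:
  fixes m :: nat and A B :: "nat \<Rightarrow> nat \<Rightarrow> nat"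
  assumes "coloring_matrix m A" and "coloring_matrix m B"
  shows "(tree_coloring_equiv m A B \<longrightarrow> num_ones m A = num_ones m B) \<and>
         (strict_tree_coloring_equiv m A B \<longrightarrow>
            (\<forall>i\<in>{1..m}. row_ones m A i = row_ones m B i))"
proof safe
  assume "tree_coloring_equiv m A B"
  then have "tA m A 2 = tA m B 2" unfolding tree_coloring_equiv_def by simp
  then show "num_ones m A = num_ones m B" by (simp add: tA2)
next
  fix i assume "strict_tree_coloring_equiv m A B" "i \<in> {1..m}"
  then have "tAi m A i 2 = tAi m B i 2" unfolding strict_tree_coloring_equiv_def by simp
  then show "row_ones m A i = row_ones m B i" using \<open>i \<in> {1..m}\<close> by (simp add: tAi2)
qed

end
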